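(* Let $n\ge1$, $\mathbf{k}=(k_1,\dots,k_n)$ positive integers, $N=n+|\mathbf{k}|$, and $D\in\mathcal{D}_{\mathbf{k}}$ with rank tableau $R(D)$. If the indices $1,2,\dots,N$ of $T(D)$ are assigned ranks $r_1,r_2,\dots,r_N$ by the Ranking Algorithm, then $0=r_1\le r_2\le\cdots\le r_N$, and more precisely $r_i-r_{i-1}\in\{0,1\}$ for each $2\le i\le N$.
   Context: $|\mathbf{k}|=k_1+\cdots+k_n$. $\mathcal{D}_{\mathbf{k}}$: sequences $(a_1,\dots,a_N)$ whose positive entries are $k_1,\dots,k_n$ in order, other entries $-1$, all partial sums $a_1+\cdots+a_{i-1}\ge0$. SW-word: $S^{k_j}$ for up step $k_j$, $W$ for $-1$. Filling Algorithm producing $T(D)$: $n$ columns, column $i$ with $k_i+1$ cells in rows $1,\dots,k_i+1$; place $1$ at top of column 1; having placed $1,\dots,i-1$, the lowest filled entry of column $j$ is active if not in row $k_j+1$; if the $i$-th letter of $\texttt{SW}(D)$ is $W$ place $i$ below the smallest active entry, otherwise at the top of the leftmost empty column; continue until $1,\dots,N$ are placed. Entries of $T(D)$ are called indices. Ranking Algorithm (producing $R(D)$, same shape, each box containing the rank of the corresponding index): ranks $0,1,\dots,k_1$ to the column-1 indices top to bottom; for $i=2,\dots,n$, if the top index of column $i$ is $A+1$ and index $A$ has rank $a$, column $i$ indices get ranks $a,a+1,\dots,a+k_i$ top to bottom. *)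

theory Defs
  imports Main
begin

text \<open>Conventions: k = [k_1,...,k_n] is a list of naturals; D = [a_1,...,a_N] is a list of
integers (HOL list index i-1 holds a_i). Columns of the tableau are 0-indexed in HOL
(HOL column j is the paper's column j+1); a column is the list of its entries, top to bottom,
the entry at list position p sitting in row p+1. Indices are 1-based naturals 1..N.\<close>

definition Dk :: "nat list \<Rightarrow> int list set" where
  "Dk k = {D. length D = length k + sum_list k
              \<and> filter (\<lambda>x. x > 0) D = map int k
              \<and> (\<forall>x\<in>set D. x > 0 \<or> x = -1)
              \<and> (\<forall>i. 1 \<le> i \<and> i \<le> length D \<longrightarrow> sum_list (take (i - 1) D) \<ge> 0)}"

definition SW_is_S :: "int list \<Rightarrow> nat \<Rightarrow> bool" where
  "SW_is_S D i = (D ! (i - 1) > 0)"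

definition active_cols :: "nat list \<Rightarrow> nat list list \<Rightarrow> nat set" where
  "active_cols k cols = {j. j < length k \<and> cols ! j \<noteq> [] \<and> length (cols ! j) < k ! j + 1}"

definition fill_step :: "nat list \<Rightarrow> int list \<Rightarrow> nat list list \<Rightarrow> nat \<Rightarrow> nat list list" where
  "fill_step k D cols i =
     (if SW_is_S D i
      then (let c = (LEAST j. j < length k \<and> cols ! j = []) in cols[c := [i]])
      else (let c = (ARG_MIN (\<lambda>j. last (cols ! j)) j. j \<in> active_cols k cols)
            in cols[c := cols ! c @ [i]]))"

definition T :: "nat list \<Rightarrow> int list \<Rightarrow> nat list list" where
  "T k D = foldl (fill_step k D) ([1] # replicate (length k - 1) []) [2..<length D + 1]"

definition col_of :: "nat list list \<Rightarrow> nat \<Rightarrow> nat" where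
  "col_of Tab x = (THE c. c < length Tab \<and> x \<in> set (Tab ! c))"

definition pos_in :: "nat list \<Rightarrow> nat \<Rightarrow> nat" where
  "pos_in xs x = (LEAST p. p < length xs \<and> xs ! p = x)"

definition rank_with :: "nat list list \<Rightarrow> nat list \<Rightarrow> nat \<Rightarrow> nat" where
  "rank_with Tab st x = st ! (col_of Tab x) + pos_in (Tab ! (col_of Tab x)) x"

definition rank_starts :: "nat list list \<Rightarrow> nat list" where
  "rank_starts Tab = foldl (\<lambda>st j. st @ [rank_with Tab st (hd (Tab ! j) - 1)]) [0] [1..<length Tab]"

definition rank :: "nat list list \<Rightarrow> nat \<Rightarrow> nat" where
  "rank Tab x = rank_with Tab (rank_starts Tab) x"

definition R :: "nat list \<Rightarrow> int list \<Rightarrow> nat list list" where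
  "R k D = map (map (rank (T k D))) (T k D)"

end

theory Submission
  imports Defs
begin

definition Sst :: "nat list \<Rightarrow> int list \<Rightarrow> nat \<Rightarrow> nat list list" where
  "Sst k D i = foldl (fill_step k D) ([1] # replicate (length k - 1) []) [2..<i+1]"

lemma Sst_Suc: "1 \<le> i \<Longrightarrow> Sst k D (Suc i) = fill_step k D (Sst k D i) (Suc i)"
  unfolding Sst_def by (simp add: upt_Suc_append)

lemma T_Sst: "T k D = Sst k D (length D)"
  unfolding T_def Sst_def by simp

lemma sum_list_pm1:
  "(\<forall>x\<in>set xs. x > 0 \<or> x = (-1::int)) \<Longrightarrow>
   sum_list xs + int (length xs) = sum_list (filter (\<lambda>x. 0 < x) xs) + int (length (filter (\<lambda>x. 0 < x) xs))"
  by (induction xs) auto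

lemma filter_take_prefix:
  "filter P (take i xs) = take (length (filter P (take i xs))) (filter P xs)"
proof -
  have "filter P xs = filter P (take i xs) @ filter P (drop i xs)"
    by (metis append_take_drop_id filter_append)
  then show ?thesis by (metis append_eq_conv_conj)
qed

lemma distinct_concat_unique:
  assumes "distinct (concat xs)" "a < length xs" "b < length xs" "x \<in> set (xs!a)" "x \<in> set (xs!b)"
  shows "a = b"
proof (rule ccontr)
  assume ne: "a \<noteq> b"
  have gen: "False" if "a' < b'" "b' < length xs" "x \<in> set (xs!a')" "x \<in> set (xs!b')" for a' b'
  proof -
    have "concat xs = concat (take b' xs) @ xs!b' @ concat (drop (Suc b') xs)"
      by (metis concat.simps(2) concat_append id_take_nth_drop that(2))
    moreover have "xs!a' \<in> set (take b' xs)"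
      using that by (metis in_set_conv_nth length_take min_less_iff_conj nth_take order.strict_trans)
    then have "x \<in> set (concat (take b' xs))"
      using that by auto
    ultimately have "distinct (concat (take b' xs) @ xs!b' @ concat (drop (Suc b') xs))"
      using assms(1) by simp
    then have "set (concat (take b' xs)) \<inter> set (xs!b') = {}" by auto
    then show False using \<open>x \<in> set (concat (take b' xs))\<close> that(4) by blast
  qed
  show False using ne gen assms by (metis linorder_neqE_nat)
qed

lemma rinv_gen:
  fixes \<rho> :: "nat \<Rightarrow> nat"
  assumes "A' \<subseteq> A \<union> {s}" "\<forall>x\<in>A. x < s"
    "\<forall>x\<in>A. \<forall>y\<in>A. x < y \<longrightarrow> \<rho> x \<le> \<rho> y"
    "\<forall>x\<in>A. \<rho> x \<le> \<rho> s \<and> \<rho> s \<le> Suc (\<rho> x)"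
  shows "(\<forall>x\<in>A'. \<rho> x \<le> \<rho> s \<and> \<rho> s \<le> Suc (\<rho> x)) \<and> (\<forall>x\<in>A'. \<forall>y\<in>A'. x < y \<longrightarrow> \<rho> x \<le> \<rho> y)"
proof (intro conjI ballI impI)
  fix x assume "x \<in> A'"
  then have "x \<in> A \<or> x = s" using assms(1) by blast
  then show "\<rho> x \<le> \<rho> s" "\<rho> s \<le> Suc (\<rho> x)" using assms(4) by auto
next
  fix x y assume xy: "x \<in> A'" "y \<in> A'" "x < y"
  then have "x \<in> A \<or> x = s" "y \<in> A \<or> y = s" using assms(1) by blast+
  then show "\<rho> x \<le> \<rho> y" using xy(3) assms(2,3,4) by fastforce
qed

definition RS :: "('a list \<Rightarrow> nat \<Rightarrow> 'a) \<Rightarrow> 'a \<Rightarrow> nat \<Rightarrow> 'a list" where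
  "RS f a m = foldl (\<lambda>st j. st @ [f st j]) [a] [1..<m]"

lemma RS_Suc: "1 \<le> m \<Longrightarrow> RS f a (Suc m) = RS f a m @ [f (RS f a m) m]"
  unfolding RS_def by (simp add: upt_Suc_append)

lemma RS_len: "1 \<le> m \<Longrightarrow> length (RS f a m) = m"
proof (induction m rule: dec_induct)
  case base
  then show ?case by (simp add: RS_def)
next
  case (step n)
  then show ?case using RS_Suc[of n f a] by simp
qed

lemma RS_take: assumes "1 \<le> j" "j \<le> m" shows "take j (RS f a m) = RS f a j"
  using assms(2)
proof (induction m rule: dec_induct)
  case base
  then show ?case using RS_len[OF assms(1), of f a] by simp
next
  case (step n)
  then have "length (RS f a n) \<ge> j" using RS_len[of n f a] assms(1) by simp
  then show ?case using RS_Suc[of n f a] step assms(1) by simp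
qed

lemma RS_nth: assumes "1 \<le> j" "j < m" shows "RS f a m ! j = f (take j (RS f a m)) j"
proof -
  have "RS f a m ! j = take (Suc j) (RS f a m) ! j" by simp
  also have "\<dots> = RS f a (Suc j) ! j" using RS_take[of "Suc j" m f a] assms by simp
  also have "\<dots> = f (RS f a j) j" using RS_Suc[of j f a] RS_len[of j f a] assms by (simp add: nth_append)
  also have "RS f a j = take j (RS f a m)" using RS_take[of j m f a] assms by simp
  finally show ?thesis .
qed

lemma RS_0: "1 \<le> m \<Longrightarrow> RS f a m ! 0 = a"
proof (induction m rule: dec_induct)
  case base
  then show ?case by (simp add: RS_def)
next
  case (step n)
  then show ?case using RS_Suc[of n f a] RS_len[of n f a] by (simp add: nth_append)
qed

lemma rank_starts_RS: "rank_starts Tab = RS (\<lambda>st j. rank_with Tab st (hd (Tab ! j) - 1)) 0 (length Tab)"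
  unfolding rank_starts_def RS_def by simp

lemma col_of_eq:
  assumes "distinct (concat Tab)" "c < length Tab" "x \<in> set (Tab!c)"
  shows "col_of Tab x = c"
  unfolding col_of_def
proof (rule the_equality)
  show "c < length Tab \<and> x \<in> set (Tab ! c)" using assms by simp
  show "\<And>c'. c' < length Tab \<and> x \<in> set (Tab ! c') \<Longrightarrow> c' = c"
    using distinct_concat_unique assms by metis
qed

lemma pos_in_eq:
  assumes "distinct xs" "p < length xs"
  shows "pos_in xs (xs!p) = p"
  unfolding pos_in_def
proof (rule Least_equality)
  show "p < length xs \<and> xs ! p = xs ! p" using assms by simp
  show "\<And>y. y < length xs \<and> xs ! y = xs ! p \<Longrightarrow> p \<le> y"
    using assms nth_eq_iff_index_eq by fastforce
qed

lemma rank_with_eq: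
  assumes "distinct (concat Tab)" "c < length Tab" "p < length (Tab!c)"
  shows "rank_with Tab st (Tab!c!p) = st!c + p"
proof -
  have "distinct (Tab!c)" using assms(1,2) by (simp add: distinct_concat_iff)
  then show ?thesis unfolding rank_with_def
    using col_of_eq[OF assms(1,2)] pos_in_eq assms by simp
qed

lemma rank_eq:
  assumes "distinct (concat Tab)" "c < length Tab" "p < length (Tab!c)"
  shows "rank Tab (Tab!c!p) = rank_starts Tab ! c + p"
  unfolding rank_def using rank_with_eq[OF assms] .

lemma rank_starts_0: "1 \<le> length Tab \<Longrightarrow> rank_starts Tab ! 0 = 0"
  unfolding rank_starts_RS by (rule RS_0)

lemma rank_starts_j:
  assumes "distinct (concat Tab)" "0 < j" "j < length Tab" "c0 < j" "hd (Tab!j) - 1 \<in> set (Tab!c0)"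
  shows "rank_starts Tab ! j = rank Tab (hd (Tab!j) - 1)"
proof -
  let ?st = "rank_starts Tab"
  obtain q where q: "q < length (Tab!c0)" "Tab!c0!q = hd (Tab!j) - 1"
    using assms(5) by (metis in_set_conv_nth)
  have "1 \<le> length Tab" using assms(2,3) by simp
  then have len: "length ?st = length Tab" unfolding rank_starts_RS by (rule RS_len)
  have "?st ! j = rank_with Tab (take j ?st) (hd (Tab!j) - 1)"
    unfolding rank_starts_RS by (rule RS_nth) (use assms(2,3) in auto)
  also have "\<dots> = take j ?st ! c0 + q"
    using rank_with_eq[OF assms(1), of c0 q] q assms by simp
  also have "\<dots> = ?st ! c0 + q" using assms(4) by simp
  also have "\<dots> = rank Tab (hd (Tab!j) - 1)"
    using rank_eq[OF assms(1), of c0 q] q assms by simp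
  finally show ?thesis .
qed

context
  fixes k :: "nat list" and D :: "int list"
  assumes n_pos: "length k \<ge> 1"
    and k_pos: "\<forall>j\<in>set k. j > 0"
    and D_in: "D \<in> Dk k"
begin

definition sc :: "nat \<Rightarrow> nat" where
  "sc i = length (filter (\<lambda>x. 0 < x) (take i D))"

lemma lenD: "length D = length k + sum_list k"
  using D_in by (simp add: Dk_def)

lemma filtD: "filter (\<lambda>x. x > 0) D = map int k"
  using D_in by (simp add: Dk_def)

lemma setD: "x \<in> set D \<Longrightarrow> x > 0 \<or> x = -1"
  using D_in by (auto simp: Dk_def)

lemma psD: "1 \<le> i \<Longrightarrow> i \<le> length D \<Longrightarrow> sum_list (take (i - 1) D) \<ge> 0"
  using D_in by (auto simp: Dk_def)

lemma filt_take: "filter (\<lambda>x. 0 < x) (take i D) = take (sc i) (map int k)"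
  using filter_take_prefix[of "\<lambda>x. 0 < x" i D] filtD by (simp add: sc_def)

lemma sc_le: "sc i \<le> length k"
proof -
  have "sc i \<le> length (filter (\<lambda>x. 0 < x) D)"
    unfolding sc_def by (metis filter_take_prefix length_take min.cobounded1 order.refl
        min_def)
  then show ?thesis using filtD by simp
qed

lemma sum_take:
  assumes "i \<le> length D"
  shows "sum_list (take i D) + int i = int (sum_list (take (sc i) k)) + int (sc i)"
proof -
  have "\<forall>x\<in>set (take i D). x > 0 \<or> x = -1" using setD by (meson in_set_takeD)
  from sum_list_pm1[OF this] have "sum_list (take i D) + int i =
     sum_list (take (sc i) (map int k)) + int (length (take (sc i) (map int k)))"
    unfolding filt_take using assms by simp
  then have "sum_list (take i D) + int i =
     sum_list (take (sc i) (map int k)) + int (sc i)"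
    using sc_le[of i] by simp
  also have "sum_list (take (sc i) (map int k)) = int (sum_list (take (sc i) k))"
    by (simp add: take_map sum_list_of_nat)
  finally show ?thesis .
qed

lemma sum_k_pos: "sum_list k \<ge> length k"
  using k_pos by (induction k) auto

lemma sc_N: "sc (length D) = length k"
  unfolding sc_def using filtD by simp

lemma sumD: "sum_list D = 0"
  using sum_take[of "length D"] sc_N lenD by simp

lemma lenD2: "length D \<ge> 2"
  using lenD sum_k_pos n_pos by simp

lemma D0: "D!0 > 0"
proof -
  have "sum_list (take 1 D) \<ge> 0" using psD[of 2] lenD2 by simp
  moreover have "take 1 D = [D!0]" using lenD2 by (cases D) auto
  moreover have "D!0 \<in> set D" using lenD2 by (cases D) auto
  ultimately show ?thesis using setD by fastforce
qed

lemma sc_1: "sc 1 = 1"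
  unfolding sc_def using lenD2 D0 by (cases D) auto

lemma sc_Suc_S: "i < length D \<Longrightarrow> D!i > 0 \<Longrightarrow> sc (Suc i) = Suc (sc i)"
  unfolding sc_def by (simp add: take_Suc_conv_app_nth)

lemma sc_Suc_W: "i < length D \<Longrightarrow> \<not> D!i > 0 \<Longrightarrow> sc (Suc i) = sc i"
  unfolding sc_def by (simp add: take_Suc_conv_app_nth)

lemma D_W: "i < length D \<Longrightarrow> \<not> D!i > 0 \<Longrightarrow> D!i = -1"
  using setD nth_mem by blast

lemma W_slack: assumes "1 \<le> i" "i < length D" "\<not> D!i > 0"
  shows "sum_list (take i D) \<ge> 1"
proof -
  have tk: "take (Suc i) D = take i D @ [D!i]" using assms by (simp add: take_Suc_conv_app_nth)
  have "D!i = -1" using D_W assms by blast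
  show ?thesis
  proof (cases "Suc i < length D")
    case True
    then have "sum_list (take (Suc i) D) \<ge> 0" using psD[of "Suc (Suc i)"] by simp
    then show ?thesis using tk \<open>D!i = -1\<close> by simp
  next
    case False
    then have "Suc i = length D" using assms by simp
    then have "sum_list (take (Suc i) D) = 0" using sumD by simp
    then show ?thesis using tk \<open>D!i = -1\<close> by simp
  qed
qed


lemma sc_pos: "1 \<le> i \<Longrightarrow> i \<le> length D \<Longrightarrow> sc i > 0"
proof -
  assume a: "1 \<le> i" "i \<le> length D"
  have "D!0 \<in> set (take i D)" using a lenD2
    by (metis in_set_conv_nth length_take min.absorb2 nth_take order_less_le_trans zero_less_one)
  then have "filter (\<lambda>x. 0 < x) (take i D) \<noteq> []" using D0 by (auto simp: filter_empty_conv)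
  then show ?thesis unfolding sc_def by simp
qed

definition Inv :: "nat \<Rightarrow> nat list list \<Rightarrow> bool" where
  "Inv i cols \<longleftrightarrow> length cols = length k
    \<and> (\<forall>j<length k. (cols!j \<noteq> []) = (j < sc i))
    \<and> (\<forall>j<length k. length (cols!j) \<le> k!j + 1)
    \<and> distinct (concat cols) \<and> set (concat cols) = {1..i}
    \<and> (\<forall>j. 0 < j \<and> j < length k \<and> cols!j \<noteq> [] \<longrightarrow> (\<exists>c<j. hd (cols!j) - 1 \<in> set (cols!c)))
    \<and> hd (cols!0) = 1"

lemma Inv_init: "Inv 1 (Sst k D 1)"
proof -
  have e: "Sst k D 1 = [1] # replicate (length k - 1) []" by (simp add: Sst_def)
  have k0: "k!0 > 0" using k_pos n_pos by (cases k) auto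
  show ?thesis unfolding Inv_def e using n_pos k0 sc_1
    by (auto simp: nth_Cons split: nat.splits)
qed

lemma step_S:
  assumes "Inv i cols" "1 \<le> i" "i < length D" "D!i > 0"
  shows "sc i < length k \<and> 0 < sc i \<and> cols!(sc i) = []
    \<and> fill_step k D cols (Suc i) = cols[sc i := [Suc i]]"
proof -
  have lt: "sc i < length k" using sc_Suc_S[OF assms(3,4)] sc_le[of "Suc i"] by simp
  have pos: "0 < sc i" using sc_pos assms by simp
  have em: "cols!(sc i) = []" using assms(1) lt unfolding Inv_def by blast
  have le: "(LEAST j. j < length k \<and> cols ! j = []) = sc i"
  proof (rule Least_equality)
    show "sc i < length k \<and> cols ! sc i = []" using lt em by simp
    show "\<And>y. y < length k \<and> cols ! y = [] \<Longrightarrow> sc i \<le> y"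
      using assms(1) unfolding Inv_def by (meson not_le)
  qed
  show ?thesis using lt pos em le assms(4)
    by (simp add: fill_step_def SW_is_S_def Let_def)
qed

lemma len_concat_sum: "length (concat xs) = (\<Sum>j<length xs. length (xs!j))"
  by (simp add: length_concat sum_list_sum_nth atLeast0LessThan)

lemma step_W:
  assumes "Inv i cols" "1 \<le> i" "i < length D" "\<not> D!i > 0"
  shows "\<exists>c. c \<in> active_cols k cols \<and> (\<forall>j\<in>active_cols k cols. last (cols!c) \<le> last (cols!j))
    \<and> fill_step k D cols (Suc i) = cols[c := cols!c @ [Suc i]]"
proof -
  have ne: "active_cols k cols \<noteq> {}"
  proof
    assume em: "active_cols k cols = {}"
    have I: "length cols = length k" "\<forall>j<length k. (cols!j \<noteq> []) = (j < sc i)"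
      "\<forall>j<length k. length (cols!j) \<le> k!j + 1" "distinct (concat cols)" "set (concat cols) = {1..i}"
      using assms(1) unfolding Inv_def by auto
    have lj: "length (cols!j) = (if j < sc i then k!j + 1 else 0)" if "j < length k" for j
    proof -
      have "j \<notin> active_cols k cols" using em by simp
      then have "\<not> (cols ! j \<noteq> [] \<and> length (cols ! j) < k ! j + 1)"
        using that unfolding active_cols_def by blast
      moreover have "length (cols!j) \<le> k!j + 1" "(cols!j \<noteq> []) = (j < sc i)" using I that by auto
      ultimately show ?thesis by auto
    qed
    have "i = length (concat cols)" using I(4,5) by (metis card_atLeastAtMost diff_Suc_1 distinct_card)
    also have "\<dots> = (\<Sum>j<length k. if j < sc i then k!j + 1 else 0)"
      unfolding len_concat_sum I(1) using lj by simp
    also have "\<dots> = (\<Sum>j<sc i. k!j + 1)"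
    proof -
      have "{..<length k} \<inter> {j. j < sc i} = {..<sc i}" using sc_le[of i] by auto
      then show ?thesis by (simp add: sum.If_cases)
    qed
    also have "\<dots> = sum_list (take (sc i) k) + sc i"
    proof -
      have "(\<Sum>j<m. k!j + 1) = (\<Sum>j<m. k!j) + m" for m by (induction m) auto
      moreover have "sum_list (take (sc i) k) = (\<Sum>j<sc i. k!j)"
        using sc_le[of i] by (simp add: sum_list_sum_nth atLeast0LessThan min_def)
      ultimately show ?thesis by simp
    qed
    finally have "i = sum_list (take (sc i) k) + sc i" .
    then have "sum_list (take i D) = 0" using sum_take[of i] assms(3) by simp
    then show False using W_slack[OF assms(2,3,4)] by simp
  qed
  then obtain j0 where j0: "j0 \<in> active_cols k cols" by blast
  define c where "c = (ARG_MIN (\<lambda>j. last (cols ! j)) j. j \<in> active_cols k cols)"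
  have c: "c \<in> active_cols k cols \<and> (\<forall>y. y \<in> active_cols k cols \<longrightarrow> last (cols!c) \<le> last (cols!y))"
    unfolding c_def by (rule arg_min_nat_lemma[where P="\<lambda>j. j \<in> active_cols k cols", OF j0])
  have "fill_step k D cols (Suc i) = cols[c := cols!c @ [Suc i]]"
    using assms(4) by (simp add: fill_step_def SW_is_S_def Let_def c_def)
  then show ?thesis using c by blast
qed


lemma concat_upd: "c < length xs \<Longrightarrow> concat (xs[c := ys]) = concat (take c xs) @ ys @ concat (drop (Suc c) xs)"
  by (simp add: upd_conv_take_nth_drop)

lemma concat_split: "c < length xs \<Longrightarrow> concat xs = concat (take c xs) @ xs!c @ concat (drop (Suc c) xs)"
  by (metis concat.simps(2) concat_append id_take_nth_drop)

lemma mem_concat_idx: assumes "x \<in> set (concat xs)" shows "\<exists>c<length xs. x \<in> set (xs!c)"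
proof -
  from assms obtain ys where ys: "ys \<in> set xs" "x \<in> set ys" by auto
  then obtain c where "c < length xs" "xs!c = ys" by (auto simp: in_set_conv_nth)
  then show ?thesis using ys by auto
qed

lemma Inv_S:
  assumes I: "Inv i cols" and a: "1 \<le> i" "i < length D" "D!i > 0"
  shows "Inv (Suc i) (cols[sc i := [Suc i]])"
proof -
  let ?c = "sc i"
  let ?cs = "cols[sc i := [Suc i]]"
  have st: "?c < length k" "0 < ?c" "cols!?c = []" using step_S[OF I a] by auto
  have I1: "length cols = length k" "\<forall>j<length k. (cols!j \<noteq> []) = (j < sc i)"
    "\<forall>j<length k. length (cols!j) \<le> k!j + 1" "distinct (concat cols)" "set (concat cols) = {1..i}"
    "\<forall>j. 0 < j \<and> j < length k \<and> cols!j \<noteq> [] \<longrightarrow> (\<exists>c<j. hd (cols!j) - 1 \<in> set (cols!c))"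
    "hd (cols!0) = 1"
    using I unfolding Inv_def by auto
  have scS: "sc (Suc i) = Suc ?c" using sc_Suc_S a by simp
  have cl: "?c < length cols" using st I1(1) by simp
  have e1: "concat ?cs = concat (take ?c cols) @ [Suc i] @ concat (drop (Suc ?c) cols)"
    using concat_upd[OF cl] .
  have e0: "concat cols = concat (take ?c cols) @ concat (drop (Suc ?c) cols)"
    using concat_split[OF cl] st by simp
  have nin: "Suc i \<notin> set (concat cols)" using I1(5) by simp
  have d: "distinct (concat ?cs)" using I1(4) nin unfolding e1 e0 by auto
  have s: "set (concat ?cs) = {1..Suc i}"
  proof -
    have "set (concat ?cs) = set (concat cols) \<union> {Suc i}" unfolding e1 e0 by auto
    then show ?thesis using I1(5) by auto
  qed
  have e: "\<exists>c<j. hd (?cs!j) - 1 \<in> set (?cs!c)" if j: "0 < j" "j < length k" "?cs!j \<noteq> []" for j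
  proof (cases "j = ?c")
    case True
    have "i \<in> set (concat cols)" using I1(5) a by simp
    then obtain c0 where c0: "c0 < length cols" "i \<in> set (cols!c0)" using mem_concat_idx by metis
    then have "cols!c0 \<noteq> []" by auto
    have "c0 < length k" using c0 I1(1) by simp
    then have "c0 < ?c" using I1(2) \<open>cols!c0 \<noteq> []\<close> by blast
    then have "?cs!c0 = cols!c0" by simp
    then show ?thesis using True c0 \<open>c0 < ?c\<close> cl by auto
  next
    case False
    then have "cols!j \<noteq> []" "?cs!j = cols!j" using j by auto
    then obtain c0 where c0: "c0 < j" "hd (cols!j) - 1 \<in> set (cols!c0)" using I1(6) j by blast
    then have "c0 \<noteq> ?c" using st by auto
    then show ?thesis using c0 \<open>?cs!j = cols!j\<close> by auto
  qed
  show ?thesis unfolding Inv_def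
  proof (intro conjI allI impI)
    show "length ?cs = length k" using I1(1) by simp
    show "(?cs!j \<noteq> []) = (j < sc (Suc i))" if "j < length k" for j
      using I1(2) that scS cl by (cases "j = ?c") auto
    show "length (?cs!j) \<le> k!j + 1" if "j < length k" for j
      using I1(3) that cl by (cases "j = ?c") auto
    show "distinct (concat ?cs)" by (rule d)
    show "set (concat ?cs) = {1..Suc i}" by (rule s)
    show "hd (?cs!0) = 1" using st I1(7) by simp
  qed (use e in auto)
qed

lemma Inv_W:
  assumes I: "Inv i cols" and a: "1 \<le> i" "i < length D" "\<not> D!i > 0"
    and c: "c \<in> active_cols k cols"
  shows "Inv (Suc i) (cols[c := cols!c @ [Suc i]])"
proof -
  let ?cs = "cols[c := cols!c @ [Suc i]]"
  have I1: "length cols = length k" "\<forall>j<length k. (cols!j \<noteq> []) = (j < sc i)"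
    "\<forall>j<length k. length (cols!j) \<le> k!j + 1" "distinct (concat cols)" "set (concat cols) = {1..i}"
    "\<forall>j. 0 < j \<and> j < length k \<and> cols!j \<noteq> [] \<longrightarrow> (\<exists>c<j. hd (cols!j) - 1 \<in> set (cols!c))"
    "hd (cols!0) = 1"
    using I unfolding Inv_def by auto
  have ca: "c < length k" "cols!c \<noteq> []" "length (cols!c) < k!c + 1" using c unfolding active_cols_def by auto
  have scS: "sc (Suc i) = sc i" using sc_Suc_W a by simp
  have cl: "c < length cols" using ca I1 by simp
  have e1: "concat ?cs = concat (take c cols) @ (cols!c @ [Suc i]) @ concat (drop (Suc c) cols)"
    using concat_upd[OF cl] .
  have e0: "concat cols = concat (take c cols) @ cols!c @ concat (drop (Suc c) cols)"
    using concat_split[OF cl] by simp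
  have nin: "Suc i \<notin> set (concat cols)" using I1(5) by simp
  have d: "distinct (concat ?cs)" using I1(4) nin unfolding e1 e0 by auto
  have s: "set (concat ?cs) = {1..Suc i}"
  proof -
    have "set (concat ?cs) = set (concat cols) \<union> {Suc i}" unfolding e1 e0 by auto
    then show ?thesis using I1(5) by auto
  qed
  have hdj: "hd (?cs!j) = hd (cols!j)" if "cols!j \<noteq> []" for j
    using that cl by (cases "j = c") auto
  have nej: "(?cs!j \<noteq> []) = (cols!j \<noteq> [])" if "j < length k" for j
    using that I1(1) ca(2) by (cases "j = c") auto
  have sub: "set (cols!j) \<subseteq> set (?cs!j)" for j
    using cl by (cases "j = c") auto
  have e: "\<exists>c0<j. hd (?cs!j) - 1 \<in> set (?cs!c0)" if j: "0 < j" "j < length k" "?cs!j \<noteq> []" for j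
  proof -
    have "cols!j \<noteq> []" using nej j by blast
    then obtain c0 where c0: "c0 < j" "hd (cols!j) - 1 \<in> set (cols!c0)" using I1(6) j by blast
    have "hd (?cs!j) - 1 \<in> set (?cs!c0)" using c0(2) hdj[OF \<open>cols!j \<noteq> []\<close>] sub[of c0] by auto
    then show ?thesis using c0(1) by blast
  qed
  have "0 < sc i" using sc_pos a by simp
  moreover have "0 < length k" using n_pos by linarith
  ultimately have ne0: "cols!0 \<noteq> []" using I1(2) by blast
  show ?thesis unfolding Inv_def
  proof (intro conjI allI impI)
    show "length ?cs = length k" using I1(1) by simp
    show "(?cs!j \<noteq> []) = (j < sc (Suc i))" if "j < length k" for j
      using I1(2) that scS nej by simp
    show "length (?cs!j) \<le> k!j + 1" if "j < length k" for j
      using I1(3) that ca cl by (cases "j = c") auto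
    show "distinct (concat ?cs)" by (rule d)
    show "set (concat ?cs) = {1..Suc i}" by (rule s)
    show "hd (?cs!0) = 1" using hdj[OF ne0] I1 by simp
  qed (use e in auto)
qed

lemma Inv_step:
  assumes I: "Inv i cols" and a: "1 \<le> i" "i < length D"
  shows "Inv (Suc i) (fill_step k D cols (Suc i))
    \<and> (\<forall>c. \<exists>ys. fill_step k D cols (Suc i) ! c = cols!c @ ys)"
proof (cases "D!i > 0")
  case True
  have st: "sc i < length k" "cols!(sc i) = []" "fill_step k D cols (Suc i) = cols[sc i := [Suc i]]"
    using step_S[OF I a True] by auto
  have "cols[sc i := [Suc i]] ! c = cols!c @ (if c = sc i then [Suc i] else [])" for c
    using st I unfolding Inv_def by (cases "c = sc i") auto
  then show ?thesis using Inv_S[OF I a True] st(3) by metis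
next
  case False
  obtain c where c: "c \<in> active_cols k cols" "fill_step k D cols (Suc i) = cols[c := cols!c @ [Suc i]]"
    using step_W[OF I a False] by blast
  have "c < length cols" using c I unfolding Inv_def active_cols_def by auto
  then have "cols[c := cols!c @ [Suc i]] ! c' = cols!c' @ (if c' = c then [Suc i] else [])" for c'
    by (cases "c' = c") auto
  then show ?thesis using Inv_W[OF I a False c(1)] c(2) by metis
qed

lemma Inv_all: "1 \<le> i \<Longrightarrow> i \<le> length D \<Longrightarrow> Inv i (Sst k D i)"
proof (induction i rule: dec_induct)
  case base
  then show ?case using Inv_init by simp
next
  case (step m)
  then show ?case using Inv_step[of m "Sst k D m"] Sst_Suc[of m k D] by simp
qed

lemma Sst_prefix:
  assumes "1 \<le> i" "i \<le> j" "j \<le> length D"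
  shows "\<exists>ys. Sst k D j ! c = Sst k D i ! c @ ys"
  using assms(2,3)
proof (induction j rule: dec_induct)
  case base
  then show ?case by simp
next
  case (step m)
  then have "Inv m (Sst k D m)" using Inv_all assms(1) by simp
  then obtain zs where "Sst k D (Suc m) ! c = Sst k D m ! c @ zs"
    using Inv_step[of m "Sst k D m"] Sst_Suc[of m k D] step assms(1) by auto
  then show ?case using step by auto
qed


lemma Tab_Inv: "Inv (length D) (T k D)"
  using Inv_all[of "length D"] lenD2 T_Sst by simp

lemma Tab_facts: "length (T k D) = length k" "distinct (concat (T k D))"
  "\<And>j. j < length k \<Longrightarrow> T k D ! j \<noteq> []"
  "\<And>j. 0 < j \<Longrightarrow> j < length k \<Longrightarrow> \<exists>c<j. hd (T k D ! j) - 1 \<in> set (T k D ! c)"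
  "hd (T k D ! 0) = 1"
  using Tab_Inv sc_N unfolding Inv_def by auto

lemma Tab_prefix: "1 \<le> i \<Longrightarrow> i \<le> length D \<Longrightarrow> \<exists>ys. T k D ! c = Sst k D i ! c @ ys"
  using Sst_prefix[of i "length D" c] T_Sst by simp

lemma rank_one: "rank (T k D) 1 = 0"
proof -
  have l0: "0 < length k" using n_pos by linarith
  have ne: "T k D ! 0 \<noteq> []" using Tab_facts(3)[OF l0] .
  then have e: "T k D ! 0 ! 0 = 1" using Tab_facts(5) by (simp add: hd_conv_nth)
  have "rank (T k D) (T k D ! 0 ! 0) = rank_starts (T k D) ! 0 + 0"
    using rank_eq[OF Tab_facts(2), of 0 0] ne l0 Tab_facts(1) by simp
  also have "\<dots> = 0" using rank_starts_0[of "T k D"] l0 Tab_facts(1) by simp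
  finally show ?thesis using e by simp
qed

definition Aset :: "nat list list \<Rightarrow> nat set" where
  "Aset cols = (\<lambda>j. last (cols!j)) ` active_cols k cols"

definition RInv :: "nat \<Rightarrow> nat list list \<Rightarrow> bool" where
  "RInv i cols \<longleftrightarrow> (\<forall>x\<in>Aset cols. rank (T k D) x \<le> rank (T k D) i \<and> rank (T k D) i \<le> Suc (rank (T k D) x))
     \<and> (\<forall>x\<in>Aset cols. \<forall>y\<in>Aset cols. x < y \<longrightarrow> rank (T k D) x \<le> rank (T k D) y)"

lemma Aset_sub: assumes "Inv i cols" shows "Aset cols \<subseteq> {1..i}"
proof
  fix x assume "x \<in> Aset cols"
  then obtain j where j: "j \<in> active_cols k cols" "x = last (cols!j)" unfolding Aset_def by blast
  then have "j < length cols" "cols!j \<noteq> []" using assms unfolding active_cols_def Inv_def by auto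
  then have "cols!j \<in> set cols" "x \<in> set (cols!j)" using j(2) by auto
  then have "x \<in> set (concat cols)" by auto
  then show "x \<in> {1..i}" using assms unfolding Inv_def by blast
qed

lemma Aset_upd: assumes "c < length cols" "ys \<noteq> []"
  shows "Aset (cols[c := ys]) \<subseteq> Aset cols \<union> {last ys}"
proof
  fix x assume "x \<in> Aset (cols[c := ys])"
  then obtain j where j: "j \<in> active_cols k (cols[c := ys])" "x = last (cols[c := ys] ! j)"
    unfolding Aset_def by blast
  show "x \<in> Aset cols \<union> {last ys}"
  proof (cases "j = c")
    case True
    then show ?thesis using j assms by simp
  next
    case False
    then have "j \<in> active_cols k cols" "x = last (cols!j)" using j unfolding active_cols_def by auto
    then show ?thesis unfolding Aset_def by blast
  qed
qed

lemma RInv_init: "RInv 1 (Sst k D 1)"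
  using Aset_sub[OF Inv_init] unfolding RInv_def by auto

lemma rank_step:
  assumes a: "1 \<le> i" "i < length D" and R: "RInv i (Sst k D i)"
  shows "(rank (T k D) (Suc i) = rank (T k D) i \<or> rank (T k D) (Suc i) = Suc (rank (T k D) i))
    \<and> RInv (Suc i) (Sst k D (Suc i))"
proof -
  let ?cols = "Sst k D i"
  let ?Tab = "T k D"
  let ?r = "rank ?Tab"
  have I: "Inv i ?cols" using Inv_all a by simp
  have lc: "length ?cols = length k" using I unfolding Inv_def by simp
  have As: "\<forall>x\<in>Aset ?cols. x < Suc i" using Aset_sub[OF I] by auto
  have R1: "\<forall>x\<in>Aset ?cols. ?r x \<le> ?r i \<and> ?r i \<le> Suc (?r x)"
    and R2: "\<forall>x\<in>Aset ?cols. \<forall>y\<in>Aset ?cols. x < y \<longrightarrow> ?r x \<le> ?r y"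
    using R unfolding RInv_def by auto
  have pre: "\<exists>ys. ?Tab ! c = Sst k D (Suc i) ! c @ ys" for c
    using Tab_prefix[of "Suc i" c] a by simp
  show ?thesis
  proof (cases "D!i > 0")
    case True
    let ?c = "sc i"
    have st: "?c < length k" "0 < ?c" "?cols!?c = []"
      "Sst k D (Suc i) = ?cols[?c := [Suc i]]"
      using step_S[OF I a True] Sst_Suc[OF a(1)] by auto
    obtain ys where ys: "?Tab ! ?c = [Suc i] @ ys" using pre[of ?c] st lc by auto
    have ne: "?Tab ! ?c \<noteq> []" and hd: "hd (?Tab ! ?c) = Suc i" and n0: "?Tab ! ?c ! 0 = Suc i"
      using ys by auto
    obtain c0 where c0: "c0 < ?c" "hd (?Tab ! ?c) - 1 \<in> set (?Tab ! c0)"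
      using Tab_facts(4)[OF st(2) st(1)] by blast
    have "?r (?Tab ! ?c ! 0) = rank_starts ?Tab ! ?c + 0"
      using rank_eq[OF Tab_facts(2), of ?c 0] st(1) Tab_facts(1) ne by simp
    also have "rank_starts ?Tab ! ?c = ?r (hd (?Tab ! ?c) - 1)"
      using rank_starts_j[OF Tab_facts(2) st(2) _ c0] st(1) Tab_facts(1) by simp
    finally have rs: "?r (Suc i) = ?r i" using n0 hd by simp
    have sub: "Aset (Sst k D (Suc i)) \<subseteq> Aset ?cols \<union> {Suc i}"
      using Aset_upd[of ?c ?cols "[Suc i]"] st lc by simp
    have "\<forall>x\<in>Aset ?cols. ?r x \<le> ?r (Suc i) \<and> ?r (Suc i) \<le> Suc (?r x)" using R1 rs by simp
    from rinv_gen[OF sub As R2 this] have "RInv (Suc i) (Sst k D (Suc i))" unfolding RInv_def .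
    then show ?thesis using rs by simp
  next
    case False
    obtain c where c: "c \<in> active_cols k ?cols" "\<forall>j\<in>active_cols k ?cols. last (?cols!c) \<le> last (?cols!j)"
      "Sst k D (Suc i) = ?cols[c := ?cols!c @ [Suc i]]"
      using step_W[OF I a False] Sst_Suc[OF a(1)] by auto
    have ca: "c < length k" "?cols!c \<noteq> []" using c(1) unfolding active_cols_def by auto
    let ?x0 = "last (?cols!c)"
    let ?p = "length (?cols!c)"
    obtain ys where ys: "?Tab ! c = (?cols!c @ [Suc i]) @ ys" using pre[of c] c(3) ca lc by auto
    have pp: "0 < ?p" using ca by simp
    have t1: "?Tab ! c ! ?p = Suc i" using ys by (simp add: nth_append)
    have t0: "?Tab ! c ! (?p - 1) = ?x0" using ys pp ca(2) by (simp add: nth_append last_conv_nth)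
    have lt: "?p < length (?Tab ! c)" using ys by simp
    have rS: "?r (Suc i) = rank_starts ?Tab ! c + ?p"
      using rank_eq[OF Tab_facts(2), of c ?p] ca Tab_facts(1) lt t1 by simp
    have r0: "?r ?x0 = rank_starts ?Tab ! c + (?p - 1)"
      using rank_eq[OF Tab_facts(2), of c "?p - 1"] ca Tab_facts(1) lt t0 by simp
    have rs: "?r (Suc i) = Suc (?r ?x0)" using rS r0 pp by simp
    have x0A: "?x0 \<in> Aset ?cols" using c(1) unfolding Aset_def by blast
    have x0min: "\<forall>x\<in>Aset ?cols. ?x0 \<le> x" using c(2) unfolding Aset_def by blast
    have x0r: "\<forall>x\<in>Aset ?cols. ?r ?x0 \<le> ?r x"
    proof
      fix x assume x: "x \<in> Aset ?cols"
      then show "?r ?x0 \<le> ?r x"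
        using x0min R2 x0A by (cases "?x0 = x") (auto simp: le_less)
    qed
    have sub: "Aset (Sst k D (Suc i)) \<subseteq> Aset ?cols \<union> {Suc i}"
      using Aset_upd[of c ?cols "?cols!c @ [Suc i]"] c(3) ca lc by simp
    have "\<forall>x\<in>Aset ?cols. ?r x \<le> ?r (Suc i) \<and> ?r (Suc i) \<le> Suc (?r x)"
    proof
      fix x assume x: "x \<in> Aset ?cols"
      have "?r x \<le> ?r i" "?r i \<le> Suc (?r ?x0)" using R1 x x0A by auto
      moreover have "?r ?x0 \<le> ?r x" using x0r x by auto
      ultimately show "?r x \<le> ?r (Suc i) \<and> ?r (Suc i) \<le> Suc (?r x)" using rs by linarith
    qed
    from rinv_gen[OF sub As R2 this] have "RInv (Suc i) (Sst k D (Suc i))" unfolding RInv_def .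
    moreover have "?r (Suc i) = ?r i \<or> ?r (Suc i) = Suc (?r i)" proof -
      have "?r ?x0 \<le> ?r i" "?r i \<le> Suc (?r ?x0)" using R1 x0A by auto
      then show ?thesis using rs by linarith
    qed
    ultimately show ?thesis by simp
  qed
qed

lemma rank_all: "1 \<le> i \<Longrightarrow> i \<le> length D \<Longrightarrow> RInv i (Sst k D i)"
proof (induction i rule: dec_induct)
  case base
  then show ?case using RInv_init by simp
next
  case (step m)
  then show ?case using rank_step[of m] by simp
qed

lemma rank_inc: "1 \<le> i \<Longrightarrow> Suc i \<le> length D \<Longrightarrow>
  rank (T k D) (Suc i) = rank (T k D) i \<or> rank (T k D) (Suc i) = Suc (rank (T k D) i)"
  using rank_step[of i] rank_all[of i] by simp

lemma rank_mono: assumes "1 \<le> i" "i \<le> j" "j \<le> length D" shows "rank (T k D) i \<le> rank (T k D) j"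
  using assms(2,3)
proof (induction j rule: dec_induct)
  case base
  then show ?case by simp
next
  case (step m)
  then show ?case using rank_inc[of m] assms(1) by fastforce
qed

end


theorem mainTheorem6:
  fixes k :: "nat list" and D :: "int list" and N :: nat and r :: "nat \<Rightarrow> nat"
  assumes n_pos: "length k \<ge> 1"
    and k_pos: "\<forall>j\<in>set k. j > 0"
    and N_def: "N = length k + sum_list k"
    and D_in: "D \<in> Dk k"
    and r_def: "\<forall>i. 1 \<le> i \<and> i \<le> N \<longrightarrow>
                   (\<exists>c p. c < length (T k D) \<and> p < length (T k D ! c)
                          \<and> T k D ! c ! p = i \<and> r i = R k D ! c ! p)"
  shows "r 1 = 0
         \<and> (\<forall>i j. 1 \<le> i \<and> i \<le> j \<and> j \<le> N \<longrightarrow> r i \<le> r j)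
         \<and> (\<forall>i. 2 \<le> i \<and> i \<le> N \<longrightarrow> r i = r (i - 1) \<or> r i = r (i - 1) + 1)"
  proof -
  note ctx = n_pos k_pos D_in
  have N: "N = length D" using lenD[OF ctx] N_def by simp
  have rr: "r i = rank (T k D) i" if h: "1 \<le> i" "i \<le> N" for i
  proof -
    obtain c p where cp: "c < length (T k D)" "p < length (T k D ! c)" "T k D ! c ! p = i"
      "r i = R k D ! c ! p" using r_def h by blast
    then show ?thesis by (simp add: R_def)
  qed
  have N1: "1 \<le> N" using lenD2[OF ctx] N by simp
  show ?thesis
  proof (intro conjI allI impI)
    show "r 1 = 0" using rr[of 1] N1 rank_one[OF ctx] by simp
    fix i j assume "1 \<le> i \<and> i \<le> j \<and> j \<le> N"
    then show "r i \<le> r j" using rr[of i] rr[of j] rank_mono[OF ctx, of i j] N by simp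
  next
    fix i assume i: "2 \<le> i \<and> i \<le> N"
    then obtain m where m: "i = Suc m" "1 \<le> m" by (cases i) auto
    show "r i = r (i - 1) \<or> r i = r (i - 1) + 1"
      using rr[of i] rr[of m] rank_inc[OF ctx, of m] m i N by simp
  qed
qed

end
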